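(* For all integers $n$ and $\alpha$ with $n\le\alpha\le 2^n$, there exists a minimal $n$-state nondeterministic finite automaton accepting a star language whose equivalent minimal deterministic finite automaton has exactly $\alpha$ states. The same statement holds with "star language" replaced by "comet language", and also with "star language" replaced by "two-sided comet language".
   Context: NFAs have a single initial state and a transition function $\delta:Q\times\Sigma\to 2^Q$ that may map to the empty set (no sink state is needed or counted); DFAs are complete, so a sink state is counted. A minimal $n$-state NFA is an NFA with $n$ states such that no NFA with fewer states accepts the same language. A language $L\subseteq\Sigma^*$ is a star language if $L=H^*$ for some regular language $H\subseteq\Sigma^*$. It is a comet language if $L=G^*H$ for regular languages $G,H\subseteq\Sigma^*$ with $G\neq\{\lambda\}$ and $G\neq\emptyset$ ($\lambda$ the empty word). It is a two-sided comet language if $L=EG^*H$ for regular languages $E,G,H\subseteq\Sigma^*$ with $G\neq\{\lambda\}$ and $G\neq\emptyset$. *)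

theory Defs
  imports Main
begin

definition conc :: "'a list set \<Rightarrow> 'a list set \<Rightarrow> 'a list set" where
  "conc A B = {u @ v | u v. u \<in> A \<and> v \<in> B}"

inductive_set kstar :: "'a list set \<Rightarrow> 'a list set" for A :: "'a list set" where
  kstar_Nil: "[] \<in> kstar A"
| kstar_app: "u \<in> A \<Longrightarrow> v \<in> kstar A \<Longrightarrow> u @ v \<in> kstar A"

record 'a nfa =
  nstates :: "nat set"
  ninit   :: nat
  ntrans  :: "nat \<Rightarrow> 'a \<Rightarrow> nat set"
  nfinal  :: "nat set"

definition is_nfa :: "'a set \<Rightarrow> 'a nfa \<Rightarrow> bool" where
  "is_nfa Alph A \<longleftrightarrow> finite (nstates A) \<and> ninit A \<in> nstates A \<and>
     nfinal A \<subseteq> nstates A \<and>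
     (\<forall>q\<in>nstates A. \<forall>a\<in>Alph. ntrans A q a \<subseteq> nstates A)"

fun nrun :: "'a nfa \<Rightarrow> nat set \<Rightarrow> 'a list \<Rightarrow> nat set" where
  "nrun A S [] = S"
| "nrun A S (a # w) = nrun A (\<Union>q\<in>S. ntrans A q a) w"

definition nfa_lang :: "'a set \<Rightarrow> 'a nfa \<Rightarrow> 'a list set" where
  "nfa_lang Alph A = {w \<in> lists Alph. nrun A {ninit A} w \<inter> nfinal A \<noteq> {}}"

record 'a dfa =
  dstates :: "nat set"
  dinit   :: nat
  dtrans  :: "nat \<Rightarrow> 'a \<Rightarrow> nat"
  dfinal  :: "nat set"

definition is_dfa :: "'a set \<Rightarrow> 'a dfa \<Rightarrow> bool" where
  "is_dfa Alph D \<longleftrightarrow> finite (dstates D) \<and> dinit D \<in> dstates D \<and>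
     dfinal D \<subseteq> dstates D \<and>
     (\<forall>q\<in>dstates D. \<forall>a\<in>Alph. dtrans D q a \<in> dstates D)"

definition dfa_lang :: "'a set \<Rightarrow> 'a dfa \<Rightarrow> 'a list set" where
  "dfa_lang Alph D = {w \<in> lists Alph. fold (\<lambda>a q. dtrans D q a) w (dinit D) \<in> dfinal D}"

definition regular :: "'a set \<Rightarrow> 'a list set \<Rightarrow> bool" where
  "regular Alph L \<longleftrightarrow> (\<exists>A. is_nfa Alph A \<and> nfa_lang Alph A = L)"

definition minimal_nfa :: "'a set \<Rightarrow> 'a nfa \<Rightarrow> nat \<Rightarrow> bool" where
  "minimal_nfa Alph A n \<longleftrightarrow> is_nfa Alph A \<and> card (nstates A) = n \<and>
     (\<forall>B. is_nfa Alph B \<and> nfa_lang Alph B = nfa_lang Alph A \<longrightarrow> n \<le> card (nstates B))"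

definition min_dfa_size :: "'a set \<Rightarrow> 'a list set \<Rightarrow> nat \<Rightarrow> bool" where
  "min_dfa_size Alph L m \<longleftrightarrow>
     (\<exists>D. is_dfa Alph D \<and> dfa_lang Alph D = L \<and> card (dstates D) = m) \<and>
     (\<forall>D. is_dfa Alph D \<and> dfa_lang Alph D = L \<longrightarrow> m \<le> card (dstates D))"

definition star_lang :: "'a set \<Rightarrow> 'a list set \<Rightarrow> bool" where
  "star_lang Alph L \<longleftrightarrow> (\<exists>H. H \<subseteq> lists Alph \<and> regular Alph H \<and> L = kstar H)"

definition comet_lang :: "'a set \<Rightarrow> 'a list set \<Rightarrow> bool" where
  "comet_lang Alph L \<longleftrightarrow> (\<exists>G H. G \<subseteq> lists Alph \<and> H \<subseteq> lists Alph \<and>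
     regular Alph G \<and> regular Alph H \<and> G \<noteq> {[]} \<and> G \<noteq> {} \<and> L = conc (kstar G) H)"

definition two_sided_comet_lang :: "'a set \<Rightarrow> 'a list set \<Rightarrow> bool" where
  "two_sided_comet_lang Alph L \<longleftrightarrow> (\<exists>E G H. E \<subseteq> lists Alph \<and> G \<subseteq> lists Alph \<and>
     H \<subseteq> lists Alph \<and> regular Alph E \<and> regular Alph G \<and> regular Alph H \<and>
     G \<noteq> {[]} \<and> G \<noteq> {} \<and> L = conc E (conc (kstar G) H))"

end

theory Submission
  imports Defs
begin


lemma nrun_append: "nrun A S (u @ v) = nrun A (nrun A S u) v"
  by (induction u arbitrary: S) auto

lemma nrun_union: "nrun A S w = (\<Union>q\<in>S. nrun A {q} w)"
proof (induction w arbitrary: S)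
  case Nil then show ?case by auto
next
  case (Cons a w)
  have "nrun A S (a # w) = nrun A (\<Union>q\<in>S. ntrans A q a) w" by simp
  also have "\<dots> = (\<Union>r\<in>(\<Union>q\<in>S. ntrans A q a). nrun A {r} w)" by (rule Cons.IH)
  also have "\<dots> = (\<Union>q\<in>S. \<Union>r\<in>ntrans A q a. nrun A {r} w)" by blast
  also have "\<dots> = (\<Union>q\<in>S. nrun A {q} (a # w))"
  proof (rule SUP_cong[OF refl])
    fix q
    have "nrun A {q} (a # w) = nrun A (ntrans A q a) w" by simp
    also have "\<dots> = (\<Union>r\<in>ntrans A q a. nrun A {r} w)" by (rule Cons.IH)
    finally show "(\<Union>r\<in>ntrans A q a. nrun A {r} w) = nrun A {q} (a # w)" by simp
  qed
  finally show ?case .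
qed

lemma nrun_mono: "S \<subseteq> T \<Longrightarrow> nrun A S w \<subseteq> nrun A T w"
proof (induction w arbitrary: S T)
  case (Cons a w)
  have "(\<Union>q\<in>S. ntrans A q a) \<subseteq> (\<Union>q\<in>T. ntrans A q a)" using Cons.prems by (rule UN_mono) simp
  then show ?case using Cons.IH by simp
qed simp

lemma nrun_states: "is_nfa Alph A \<Longrightarrow> S \<subseteq> nstates A \<Longrightarrow> w \<in> lists Alph \<Longrightarrow> nrun A S w \<subseteq> nstates A"
proof (induction w arbitrary: S)
  case (Cons a w)
  have a: "a \<in> Alph" using Cons.prems(3) by simp
  have "ntrans A q a \<subseteq> nstates A" if "q \<in> S" for q
    using Cons.prems(1,2) a that unfolding is_nfa_def by blast
  then have "(\<Union>q\<in>S. ntrans A q a) \<subseteq> nstates A" by blast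
  then show ?case using Cons by simp
qed simp

lemma nrun_single: "nrun A S [a] = (\<Union>q\<in>S. ntrans A q a)" by simp

lemma dfa_states: "is_dfa Alph D \<Longrightarrow> s \<in> dstates D \<Longrightarrow> w \<in> lists Alph \<Longrightarrow> fold (\<lambda>a q. dtrans D q a) w s \<in> dstates D"
  by (induction w arbitrary: s) (auto simp: is_dfa_def)

lemma kstar_closed:
  assumes "[] \<in> L" "\<And>u v. u \<in> L \<Longrightarrow> v \<in> L \<Longrightarrow> u @ v \<in> L"
  shows "kstar L = L"
proof
  show "kstar L \<subseteq> L"
  proof
    fix w assume "w \<in> kstar L" then show "w \<in> L"
    proof (induction rule: kstar.induct)
      case kstar_Nil show ?case by (rule assms(1))
    next
      case (kstar_app u v) then show ?case by (blast intro: assms(2))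
    qed
  qed
next
  show "L \<subseteq> kstar L"
  proof
    fix w assume "w \<in> L" then have "w @ [] \<in> kstar L" by (intro kstar_app kstar_Nil)
    then show "w \<in> kstar L" by simp
  qed
qed

lemma conc_Nil_r: "conc X {[]} = X" unfolding conc_def by auto
lemma conc_Nil_l: "conc {[]} X = X" unfolding conc_def by auto

lemma nrun_empty: "nrun A {} w = {}" by (induction w) auto

lemma regular_Nil: "regular Alph {[]}"
proof -
  let ?A = "\<lparr>nstates = {0::nat}, ninit = 0, ntrans = \<lambda>q a. {}, nfinal = {0}\<rparr> :: 'a nfa"
  have "is_nfa Alph ?A" unfolding is_nfa_def by auto
  moreover have "nfa_lang Alph ?A = {[]}"
  proof -
    have "nrun ?A {0} w \<inter> {0} \<noteq> {} \<longleftrightarrow> w = []" for w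
      by (cases w) (auto simp: nrun_empty)
    then show ?thesis unfolding nfa_lang_def by auto
  qed
  ultimately show ?thesis unfolding regular_def by blast
qed

definition good :: "nat \<Rightarrow> nat \<Rightarrow> bool" where
  "good n \<alpha> \<longleftrightarrow> (\<exists>(Alph :: nat set) A. finite Alph \<and> minimal_nfa Alph A n \<and>
     star_lang Alph (nfa_lang Alph A) \<and> comet_lang Alph (nfa_lang Alph A) \<and>
     two_sided_comet_lang Alph (nfa_lang Alph A) \<and> min_dfa_size Alph (nfa_lang Alph A) \<alpha>)"

lemma framework:
  fixes Alph :: "nat set" and A :: "nat nfa" and n \<alpha> :: nat and x y :: "nat \<Rightarrow> nat list"
  assumes fin: "finite Alph" and nfa: "is_nfa Alph A" and st: "nstates A = {..<n}"
    and ini: "ninit A = 0" and fi: "nfinal A = {0}"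
    and xy: "\<And>q. q < n \<Longrightarrow> x q \<in> lists Alph \<and> y q \<in> lists Alph \<and> nrun A {0} (x q) = {q}
                \<and> (\<forall>p<n. 0 \<in> nrun A {p} (y q) \<longleftrightarrow> p = q)"
    and w0: "w0 \<in> lists Alph" "w0 \<noteq> []" "0 \<in> nrun A {0} w0"
    and card: "card ((\<lambda>w. nrun A {0} w) ` lists Alph) = \<alpha>"
  shows "good n \<alpha>"
proof -
  define L where "L = nfa_lang Alph A"
  have L: "L = {w \<in> lists Alph. 0 \<in> nrun A {0} w}"
    unfolding L_def nfa_lang_def ini fi by auto
  have "0 \<in> nstates A" using nfa ini by (simp add: is_nfa_def)
  then have n0: "0 < n" using st by simp
  have Sset: "0 \<in> nrun A S (y q) \<longleftrightarrow> q \<in> S" if "S \<subseteq> {..<n}" "q < n" for S q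
  proof -
    have "0 \<in> nrun A S (y q) \<longleftrightarrow> (\<exists>p\<in>S. 0 \<in> nrun A {p} (y q))"
      by (subst nrun_union) blast
    also have "\<dots> \<longleftrightarrow> q \<in> S"
    proof -
      have "\<forall>p\<in>S. (0 \<in> nrun A {p} (y q)) = (p = q)" using xy[OF that(2)] that(1) by blast
      then have "(\<exists>p\<in>S. 0 \<in> nrun A {p} (y q)) = (\<exists>p\<in>S. p = q)"
        by (intro bex_cong refl) blast
      also have "\<dots> = (q \<in> S)" by blast
      finally show ?thesis .
    qed
    finally show ?thesis .
  qed
  have clos: "u @ v \<in> L" if "u \<in> L" "v \<in> L" for u v
  proof -
    have "0 \<in> nrun A {0} u" "0 \<in> nrun A {0} v" using that L by auto
    then have "nrun A {0} v \<subseteq> nrun A (nrun A {0} u) v" by (intro nrun_mono) auto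
    then show ?thesis using that \<open>0 \<in> nrun A {0} v\<close> unfolding L by (auto simp: nrun_append)
  qed
  have nil: "[] \<in> L" unfolding L by simp
  have ks: "kstar L = L" using kstar_closed[OF nil clos] by blast
  have Lsub: "L \<subseteq> lists Alph" unfolding L by auto
  have regL: "regular Alph L" unfolding regular_def L_def using nfa by blast
  have Lne: "L \<noteq> {[]}" "L \<noteq> {}" using w0 unfolding L by auto
  have star: "star_lang Alph L" unfolding star_lang_def using ks Lsub regL by auto
  have comet: "comet_lang Alph L" unfolding comet_lang_def
    using ks Lsub regL Lne regular_Nil[of Alph] conc_Nil_r[of L]
    by (intro exI[of _ L] exI[of _ "{[]}"]) auto
  have two: "two_sided_comet_lang Alph L" unfolding two_sided_comet_lang_def
    using ks Lsub regL Lne regular_Nil[of Alph] conc_Nil_r[of L] conc_Nil_l[of L]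
    by (intro exI[of _ "{[]}"] exI[of _ L] exI[of _ "{[]}"]) auto
  have xyL: "x p @ y q \<in> L \<longleftrightarrow> p = q" if "p < n" "q < n" for p q
    using xy[OF that(1)] xy[OF that(2)] that unfolding L by (auto simp: nrun_append)
  have minA: "minimal_nfa Alph A n"
    unfolding minimal_nfa_def
  proof (intro conjI allI impI)
    show "is_nfa Alph A" by fact
    show "card (nstates A) = n" using st by simp
    fix B assume B: "is_nfa Alph B \<and> nfa_lang Alph B = nfa_lang Alph A"
    have LB: "nfa_lang Alph B = L" using B L_def by simp
    have "\<exists>s. s \<in> nrun B {ninit B} (x q) \<and> nrun B {s} (y q) \<inter> nfinal B \<noteq> {}" if "q < n" for q
    proof -
      have "x q @ y q \<in> nfa_lang Alph B" using xyL[OF that that] LB by simp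
      then have "nrun B (nrun B {ninit B} (x q)) (y q) \<inter> nfinal B \<noteq> {}"
        unfolding nfa_lang_def by (simp add: nrun_append)
      then show ?thesis by (subst (asm) nrun_union) blast
    qed
    then have "\<forall>q. \<exists>s. q < n \<longrightarrow> s \<in> nrun B {ninit B} (x q) \<and> nrun B {s} (y q) \<inter> nfinal B \<noteq> {}"
      by blast
    from choice[OF this] obtain s where s0: "\<forall>q. q < n \<longrightarrow> s q \<in> nrun B {ninit B} (x q) \<and> nrun B {s q} (y q) \<inter> nfinal B \<noteq> {}"
      by blast
    have s: "s q \<in> nrun B {ninit B} (x q) \<and> nrun B {s q} (y q) \<inter> nfinal B \<noteq> {}" if "q < n" for q
      using s0 that by blast
    have inj: "inj_on s {..<n}"
    proof (rule inj_onI)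
      fix p q assume pq: "p \<in> {..<n}" "q \<in> {..<n}" "s p = s q"
      have "nrun B {s p} (y q) \<subseteq> nrun B (nrun B {ninit B} (x p)) (y q)"
        using s[of p] pq by (intro nrun_mono) auto
      then have "nrun B {ninit B} (x p @ y q) \<inter> nfinal B \<noteq> {}"
        using s[of q] pq by (auto simp: nrun_append)
      moreover have "x p @ y q \<in> lists Alph" using xy pq by auto
      ultimately have "x p @ y q \<in> L" using LB unfolding nfa_lang_def by auto
      then show "p = q" using xyL pq by auto
    qed
    have "s ` {..<n} \<subseteq> nstates B"
    proof
      fix t assume "t \<in> s ` {..<n}"
      then obtain q where q: "q < n" "t = s q" by auto
      have "nrun B {ninit B} (x q) \<subseteq> nstates B"
        using B xy[OF q(1)] by (intro nrun_states[of Alph]) (auto simp: is_nfa_def)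
      then show "t \<in> nstates B" using s[OF q(1)] q by auto
    qed
    moreover have "finite (nstates B)" using B by (simp add: is_nfa_def)
    ultimately have "card {..<n} \<le> card (nstates B)" using inj by (intro card_inj_on_le)
    then show "n \<le> card (nstates B)" by simp
  qed
  define R where "R = (\<lambda>w. nrun A {0} w) ` lists Alph"
  have Rsub: "S \<subseteq> {..<n}" if SR: "S \<in> R" for S
  proof -
    obtain u where u: "u \<in> lists Alph" "S = nrun A {0} u" using SR unfolding R_def by blast
    have "{0} \<subseteq> nstates A" using st n0 by simp
    from nrun_states[OF nfa this u(1)] show ?thesis using u st by simp
  qed
  have finR: "finite R" using Rsub by (intro finite_subset[of R "Pow {..<n}"]) auto
  have cR: "card R = \<alpha>" using card R_def by simp
  have R0: "{0} \<in> R" unfolding R_def by (intro image_eqI[of _ _ "[]"]) auto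
  have Rstep: "nrun A S [a] \<in> R" if SR: "S \<in> R" and aA: "a \<in> Alph" for S a
  proof -
    obtain u where u: "u \<in> lists Alph" "S = nrun A {0} u" using SR unfolding R_def by blast
    then show ?thesis unfolding R_def using aA
      by (intro image_eqI[of _ _ "u @ [a]"]) (auto simp: nrun_append)
  qed
  obtain h where h: "bij_betw h R {0..<card R}" using ex_bij_betw_finite_nat[OF finR] by blast
  define g where "g = inv_into R h"
  have g: "bij_betw g {0..<card R} R" unfolding g_def using h by (rule bij_betw_inv_into)
  have gh: "g (h S) = S" if "S \<in> R" for S
    unfolding g_def using h that by (simp add: bij_betw_def inv_into_f_f)
  define D where "D = \<lparr>dstates = {0..<\<alpha>}, dinit = h {0},
      dtrans = \<lambda>i a. h (nrun A (g i) [a]), dfinal = {i \<in> {0..<\<alpha>}. 0 \<in> g i}\<rparr>"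
  have hR: "h S \<in> {0..<\<alpha>}" if "S \<in> R" for S using bij_betw_apply[OF h that] cR by simp
  have gR: "g i \<in> R" if "i \<in> {0..<\<alpha>}" for i using bij_betw_apply[OF g] that cR by simp
  have fold: "fold (\<lambda>a q. dtrans D q a) w (h S) = h (nrun A S w)" if "S \<in> R" "w \<in> lists Alph" for S w
    using that
  proof (induction w arbitrary: S)
    case Nil then show ?case by simp
  next
    case (Cons a w)
    have "fold (\<lambda>a q. dtrans D q a) (a # w) (h S) = fold (\<lambda>a q. dtrans D q a) w (h (nrun A S [a]))"
      using gh[OF Cons.prems(1)] by (simp add: D_def)
    also have "\<dots> = h (nrun A (nrun A S [a]) w)"
      using Cons.IH[of "nrun A S [a]"] Rstep[OF Cons.prems(1)] Cons.prems(2) by simp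
    finally show ?case by (simp add: nrun_append[symmetric])
  qed
  have isD: "is_dfa Alph D" unfolding is_dfa_def D_def
    using hR[OF R0] hR[OF Rstep[OF gR]] by auto
  have langD: "dfa_lang Alph D = L"
  proof -
    have "fold (\<lambda>a q. dtrans D q a) w (dinit D) \<in> dfinal D \<longleftrightarrow> 0 \<in> nrun A {0} w"
      if "w \<in> lists Alph" for w
    proof -
      have "nrun A {0} w \<in> R" unfolding R_def using that by blast
      then show ?thesis using fold[OF R0 that] gh hR unfolding D_def by auto
    qed
    then show ?thesis unfolding dfa_lang_def L by auto
  qed
  have mind: "min_dfa_size Alph L \<alpha>" unfolding min_dfa_size_def
  proof (intro conjI allI impI)
    show "\<exists>D. is_dfa Alph D \<and> dfa_lang Alph D = L \<and> card (dstates D) = \<alpha>"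
      using isD langD by (intro exI[of _ D]) (simp add: D_def)
    fix D' :: "nat dfa" assume D': "is_dfa Alph D' \<and> dfa_lang Alph D' = L"
    define wS where "wS S = (SOME w. w \<in> lists Alph \<and> nrun A {0} w = S)" for S
    have wS: "wS S \<in> lists Alph \<and> nrun A {0} (wS S) = S" if "S \<in> R" for S
      unfolding wS_def using that unfolding R_def by (rule imageE) (rule someI, auto)
    define f where "f S = fold (\<lambda>a q. dtrans D' q a) (wS S) (dinit D')" for S
    have memL: "wS S @ y q \<in> L \<longleftrightarrow> q \<in> S" if "S \<in> R" "q < n" for S q
      using wS[OF that(1)] xy[OF that(2)] Sset[OF Rsub[OF that(1)] that(2)]
      unfolding L by (auto simp: nrun_append)
    have memD: "wS S @ y q \<in> L \<longleftrightarrow> fold (\<lambda>a q. dtrans D' q a) (y q) (f S) \<in> dfinal D'"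
      if "S \<in> R" "q < n" for S q
      using D' wS[OF that(1)] xy[OF that(2)] unfolding dfa_lang_def f_def by auto
    have inj: "inj_on f R"
    proof (rule inj_onI, rule ccontr)
      fix S T assume ST: "S \<in> R" "T \<in> R" "f S = f T" "S \<noteq> T"
      then obtain q where q: "(q \<in> S) \<noteq> (q \<in> T)" by blast
      then have "q < n" using Rsub ST by blast
      then show False using memL[OF ST(1) \<open>q<n\<close>] memL[OF ST(2) \<open>q<n\<close>]
          memD[OF ST(1) \<open>q<n\<close>] memD[OF ST(2) \<open>q<n\<close>] ST(3) q by auto
    qed
    have iD: "is_dfa Alph D'" using D' by simp
    have "f ` R \<subseteq> dstates D'"
    proof
      fix t assume "t \<in> f ` R"
      then obtain S where S: "S \<in> R" "t = f S" by blast
      have "dinit D' \<in> dstates D'" using iD by (simp add: is_dfa_def)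
      from dfa_states[OF iD this] wS[OF S(1)] show "t \<in> dstates D'" unfolding S(2) f_def by blast
    qed
    moreover have "finite (dstates D')" using D' by (simp add: is_dfa_def)
    ultimately have "card R \<le> card (dstates D')" using inj by (intro card_inj_on_le)
    then show "\<alpha> \<le> card (dstates D')" using cR by simp
  qed
  show ?thesis unfolding good_def using fin minA star comet two mind L_def by blast
qed



lemma modlem:
  fixes p q n :: nat
  assumes "p < n" "q < n"
  shows "(p + (n - q)) mod n = 0 \<longleftrightarrow> p = q"
proof (cases "q \<le> p")
  case True
  have e: "p + (n - q) = (p - q) + n" using True assms by simp
  have "(p + (n - q)) mod n = ((p - q) + n) mod n" by (simp only: e)
  also have "\<dots> = (p - q) mod n" by (rule mod_add_self2)
  also have "\<dots> = p - q" using assms by (intro mod_less) simp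
  finally have "(p + (n - q)) mod n = p - q" .
  then show ?thesis using True by auto
next
  case False
  then have lt: "p + (n - q) < n" "0 < p + (n - q)" using assms by auto
  have "(p + (n - q)) mod n = p + (n - q)" using lt(1) by (rule mod_less)
  then show ?thesis using False lt assms by simp
qed

lemma good_eq:
  assumes n1: "1 \<le> n"
  shows "good n n"
proof -
  define A :: "nat nfa" where "A = \<lparr>nstates = {..<n}, ninit = 0, ntrans = \<lambda>q a. {Suc q mod n}, nfinal = {0}\<rparr>"
  have n0: "0 < n" using n1 by simp
  have run: "nrun A {p} w = {(p + length w) mod n}" if "p < n" for p w
    using that
  proof (induction w arbitrary: p)
    case Nil then show ?case by simp
  next
    case (Cons a w)
    have "nrun A {p} (a # w) = nrun A {Suc p mod n} w" by (simp add: A_def)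
    also have "\<dots> = {(Suc p mod n + length w) mod n}" using n0 by (intro Cons.IH) simp
    also have "\<dots> = {(p + length (a # w)) mod n}" by (simp add: mod_add_left_eq)
    finally show ?case .
  qed
  define x :: "nat \<Rightarrow> nat list" where "x q = replicate q 0" for q
  define y :: "nat \<Rightarrow> nat list" where "y q = replicate (n - q) 0" for q
  show ?thesis
  proof (rule framework[of "{0}" A n x y "replicate n 0"])
    show "finite {0::nat}" by simp
    show "is_nfa {0} A" unfolding is_nfa_def A_def using n1 by auto
    show "nstates A = {..<n}" "ninit A = 0" "nfinal A = {0}" by (simp_all add: A_def)
    show "x q \<in> lists {0} \<and> y q \<in> lists {0} \<and> nrun A {0} (x q) = {q} \<and>
          (\<forall>p<n. 0 \<in> nrun A {p} (y q) \<longleftrightarrow> p = q)" if "q < n" for q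
      using that modlem[of _ n q] n0 by (auto simp: x_def y_def run)
    show "replicate n 0 \<in> lists {0}" by (induction n) auto
    show "replicate n (0::nat) \<noteq> []" using n1 by simp
    show "0 \<in> nrun A {0} (replicate n 0)" using n0 by (simp add: run)
    have "(\<lambda>w. nrun A {0} w) ` lists {0} = (\<lambda>q. {q}) ` {..<n}"
    proof
      show "(\<lambda>w. nrun A {0} w) ` lists {0} \<subseteq> (\<lambda>q. {q}) ` {..<n}"
        using n0 by (auto simp: run)
      show "(\<lambda>q. {q}) ` {..<n} \<subseteq> (\<lambda>w. nrun A {0} w) ` lists {0}"
      proof
        fix T assume "T \<in> (\<lambda>q. {q}) ` {..<n}"
        then obtain q where q: "q < n" "T = {q}" by auto
        then have "T = nrun A {0} (replicate q 0)" using n0 by (simp add: run)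
        then show "T \<in> (\<lambda>w. nrun A {0} w) ` lists {0}" by (intro image_eqI[of _ _ "replicate q 0"]) auto
      qed
    qed
    moreover have "card ((\<lambda>q. {q}) ` {..<n}) = n" by (subst card_image) (auto simp: inj_on_def)
    ultimately show "card ((\<lambda>w. nrun A {0} w) ` lists {0}) = n" by simp
  qed
qed

lemma good_gt:
  assumes n1: "1 \<le> n" and lt: "n < \<alpha>" and le: "\<alpha> \<le> 2 ^ n"
  shows "good n \<alpha>"
proof -
  define X where "X = insert {} ((\<lambda>q. {q}) ` {..<n})"
  have XP: "X \<subseteq> Pow {..<n}" by (auto simp: X_def)
  have cX: "card X = Suc n" unfolding X_def
    by (subst card_insert_disjoint) (auto simp: card_image inj_on_def)
  have cP: "card (Pow {..<n}) = 2 ^ n" by (simp add: card_Pow)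
  have "card (Pow {..<n} - X) = 2 ^ n - Suc n"
    using card_Diff_subset[OF finite_subset[OF XP] XP] cX cP by simp
  then have "\<alpha> - Suc n \<le> card (Pow {..<n} - X)" using le by simp
  then obtain F where F: "F \<subseteq> Pow {..<n} - X" "card F = \<alpha> - Suc n" "finite F"
    by (rule obtain_subset_with_card_n)
  define C where "C = X \<union> F"
  have CP: "C \<subseteq> Pow {..<n}" using XP F by (auto simp: C_def)
  have finC: "finite C" using CP by (rule finite_subset) simp
  have cC: "card C = \<alpha>" unfolding C_def
    using card_Un_disjoint[of X F] finite_subset[OF XP] F cX lt by auto
  have emC: "{} \<in> C" and sgC: "\<And>q. q < n \<Longrightarrow> {q} \<in> C" by (auto simp: C_def X_def)
  obtain ts where ts: "bij_betw ts {0..<\<alpha>} C" using ex_bij_betw_nat_finite[OF finC] cC by auto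
  have tsC: "ts a \<in> C" if "a < \<alpha>" for a using bij_betw_apply[OF ts] that by simp
  have tsim: "ts ` {0..<\<alpha>} = C" using ts by (simp add: bij_betw_def)
  define A :: "nat nfa" where "A = \<lparr>nstates = {..<n}, ninit = 0,
     ntrans = \<lambda>p a. if a < \<alpha> then (if p = 0 then ts a else {}) else (if p + \<alpha> = a then {0} else {}),
     nfinal = {0}\<rparr>"
  define Alph :: "nat set" where "Alph = {..<\<alpha> + n}"
  have step: "nrun A S [a] \<in> C" if "S \<in> C" for S a
  proof (cases "a < \<alpha>")
    case True
    have "nrun A S [a] = (\<Union>p\<in>S. if p = 0 then ts a else {})" using True by (simp add: A_def)
    also have "\<dots> = (if 0 \<in> S then ts a else {})" by auto
    finally show ?thesis using tsC True emC by simp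
  next
    case False
    have "nrun A S [a] = (\<Union>p\<in>S. if p + \<alpha> = a then {0} else {})" using False by (simp add: A_def)
    also have "\<dots> = (if a - \<alpha> \<in> S then {0} else {})" using False by auto
    finally show ?thesis using sgC[of 0] n1 emC by simp
  qed
  have reach: "nrun A S w \<in> C" if "S \<in> C" for S w
    using that
  proof (induction w arbitrary: S)
    case Nil then show ?case by simp
  next
    case (Cons a w)
    have "nrun A S (a # w) = nrun A (nrun A S [a]) w" by simp
    then show ?case using Cons.IH[OF step[OF Cons.prems]] by simp
  qed
  have one: "nrun A {0} [a] = ts a" if "a < \<alpha>" for a using that by (simp add: A_def)
  define idx where "idx T = inv_into {0..<\<alpha>} ts T" for T
  have idx: "idx T < \<alpha> \<and> ts (idx T) = T" if "T \<in> C" for T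
    using that tsim inv_into_into[of T ts "{0..<\<alpha>}"] f_inv_into_f[of T ts "{0..<\<alpha>}"]
    unfolding idx_def by auto
  define x :: "nat \<Rightarrow> nat list" where "x q = [idx {q}]" for q
  define y :: "nat \<Rightarrow> nat list" where "y q = [\<alpha> + q]" for q
  show ?thesis
  proof (rule framework[of Alph A n x y "x 0"])
    show "finite Alph" by (simp add: Alph_def)
    show "is_nfa Alph A" unfolding is_nfa_def
    proof (intro conjI ballI)
      show "finite (nstates A)" "ninit A \<in> nstates A" "nfinal A \<subseteq> nstates A"
        using n1 by (auto simp: A_def)
      fix q a assume "q \<in> nstates A" "a \<in> Alph"
      show "ntrans A q a \<subseteq> nstates A"
        using tsC[of a] CP n1 by (auto simp: A_def)
    qed
    show "nstates A = {..<n}" "ninit A = 0" "nfinal A = {0}" by (simp_all add: A_def)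
    show "x q \<in> lists Alph \<and> y q \<in> lists Alph \<and> nrun A {0} (x q) = {q} \<and>
          (\<forall>p<n. 0 \<in> nrun A {p} (y q) \<longleftrightarrow> p = q)" if "q < n" for q
      using idx[OF sgC[OF that]] one[of "idx {q}"] that
      by (auto simp: x_def y_def Alph_def A_def)
    show "x 0 \<in> lists Alph" "x 0 \<noteq> []" "0 \<in> nrun A {0} (x 0)"
      using idx[OF sgC[of 0]] one[of "idx {0}"] n1 by (auto simp: x_def Alph_def)
    have "(\<lambda>w. nrun A {0} w) ` lists Alph = C"
    proof
      show "(\<lambda>w. nrun A {0} w) ` lists Alph \<subseteq> C" using reach sgC[of 0] n1 by auto
      show "C \<subseteq> (\<lambda>w. nrun A {0} w) ` lists Alph"
      proof
        fix T assume T: "T \<in> C"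
        then have "T = nrun A {0} [idx T]" using idx[OF T] one by simp
        moreover have "[idx T] \<in> lists Alph" using idx[OF T] by (simp add: Alph_def)
        ultimately show "T \<in> (\<lambda>w. nrun A {0} w) ` lists Alph" by blast
      qed
    qed
    then show "card ((\<lambda>w. nrun A {0} w) ` lists Alph) = \<alpha>" using cC by simp
  qed
qed

theorem mainTheorem3:
  fixes n \<alpha> :: nat
  assumes "1 \<le> n" and "n \<le> \<alpha>" and "\<alpha> \<le> 2 ^ n"
  shows "(\<exists>(Alph :: nat set) A. finite Alph \<and> minimal_nfa Alph A n \<and>
            star_lang Alph (nfa_lang Alph A) \<and> min_dfa_size Alph (nfa_lang Alph A) \<alpha>)
       \<and> (\<exists>(Alph :: nat set) A. finite Alph \<and> minimal_nfa Alph A n \<and>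
            comet_lang Alph (nfa_lang Alph A) \<and> min_dfa_size Alph (nfa_lang Alph A) \<alpha>)
       \<and> (\<exists>(Alph :: nat set) A. finite Alph \<and> minimal_nfa Alph A n \<and>
            two_sided_comet_lang Alph (nfa_lang Alph A) \<and> min_dfa_size Alph (nfa_lang Alph A) \<alpha>)"
proof -
  have "good n \<alpha>"
  proof (cases "\<alpha> = n")
    case True then show ?thesis using good_eq assms by simp
  next
    case False then show ?thesis using good_gt assms by simp
  qed
  then show ?thesis unfolding good_def by blast
qed

end
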